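(* Let $d\in\{4,5\}$ and let $(h_0,\dots,h_d)\in\mathbb{Z}^{d+1}$ satisfy $h_0=1$ and $h_i=h_{d-i}$ for all $i$; write $h(t)=\sum_{i=0}^dh_it^i=\sum_{i=0}^{2}\gamma_it^i(1+t)^{d-2i}$. If $(\gamma_0,\gamma_1,\gamma_2)$ is an $f$-vector, then $(h_0,\dots,h_d)$ is log-concave. If $(\gamma_0,\gamma_1,\gamma_2)$ is the $f$-vector of a balanced simplicial complex, then $h(t)$ is real-rooted.
   Context: An $f$-vector is the sequence $(f_0,f_1,\dots)$ counting the faces of cardinality $0,1,\dots$ of a simplicial complex. A pure simplicial complex of dimension $k$ is balanced if its vertices can be colored with $k+1$ colors so that no face contains two vertices of the same color; a sequence is the $f$-vector of a balanced complex if it is the $f$-vector of such a complex. A sequence $(h_i)$ is log-concave if $h_i^2\geqslant h_{i-1}h_{i+1}$ for all $0<i<d$. A polynomial is real-rooted if all its roots are real. *)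

theory Defs
  imports Complex_Main "HOL-Computational_Algebra.Polynomial"
begin

definition simplicial_complex :: "nat set set \<Rightarrow> bool" where
  "simplicial_complex K \<longleftrightarrow> finite K \<and> K \<noteq> {} \<and> (\<forall>F\<in>K. finite F) \<and>
     (\<forall>F\<in>K. \<forall>G. G \<subseteq> F \<longrightarrow> G \<in> K)"

definition face_count :: "nat set set \<Rightarrow> nat \<Rightarrow> nat" where
  "face_count K i = card {F\<in>K. card F = i}"

definition is_f_vector_of :: "int list \<Rightarrow> nat set set \<Rightarrow> bool" where
  "is_f_vector_of gs K \<longleftrightarrow>
     (\<forall>i. int (face_count K i) = (if i < length gs then gs ! i else 0))"

definition is_f_vector :: "int list \<Rightarrow> bool" where
  "is_f_vector gs \<longleftrightarrow> (\<exists>K. simplicial_complex K \<and> is_f_vector_of gs K)"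

text \<open>Pure of dimension r - 1: every facet (maximal face) has cardinality r.\<close>
definition pure_complex :: "nat set set \<Rightarrow> nat \<Rightarrow> bool" where
  "pure_complex K r \<longleftrightarrow>
     (\<forall>F\<in>K. (\<forall>G\<in>K. F \<subseteq> G \<longrightarrow> G = F) \<longrightarrow> card F = r)"

definition balanced_complex :: "nat set set \<Rightarrow> bool" where
  "balanced_complex K \<longleftrightarrow> simplicial_complex K \<and>
     (\<exists>r. pure_complex K r \<and>
        (\<exists>c :: nat \<Rightarrow> nat. (\<forall>v\<in>\<Union>K. c v < r) \<and> (\<forall>F\<in>K. inj_on c F)))"

definition is_balanced_f_vector :: "int list \<Rightarrow> bool" where
  "is_balanced_f_vector gs \<longleftrightarrow> (\<exists>K. balanced_complex K \<and> is_f_vector_of gs K)"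

definition log_concave_seq :: "(nat \<Rightarrow> int) \<Rightarrow> nat \<Rightarrow> bool" where
  "log_concave_seq h d \<longleftrightarrow> (\<forall>i. 0 < i \<and> i < d \<longrightarrow> h (i - 1) * h (i + 1) \<le> (h i)\<^sup>2)"

definition real_rooted :: "int poly \<Rightarrow> bool" where
  "real_rooted p \<longleftrightarrow> (\<forall>z::complex. poly (map_poly of_int p) z = 0 \<longrightarrow> z \<in> \<real>)"

end

theory Submission
  imports Defs
begin

lemma sq_real:
  fixes x :: complex
  assumes "x^2 = complex_of_real c" "c \<ge> 0"
  shows "x \<in> \<real>"
proof -
  define s where "s = complex_of_real (sqrt c)"
  have "s^2 = complex_of_real c" using assms(2)
    by (simp add: s_def flip: of_real_power)
  then have "(x - s) * (x + s) = 0" using assms(1) by (simp add: algebra_simps power2_eq_square)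
  then have "x - s = 0 \<or> x + s = 0" by simp
  then have "x = s \<or> x = -s" by (auto simp: add_eq_0_iff2)
  then show ?thesis by (auto simp: s_def)
qed

lemma quartic_real:
  fixes z :: complex and n g :: real
  assumes "n \<ge> 0" "g \<ge> 0" "4 * g \<le> n^2"
    and eq: "(1+z)^4 + of_real n * z * (1+z)^2 + of_real g * z^2 = 0"
  shows "z \<in> \<real>"
proof -
  have z0: "z \<noteq> 0" using eq by auto
  define w where "w = (1+z)^2 / z"
  have wz: "(1+z)^2 = w * z" using z0 by (simp add: w_def)
  have e4: "(1+z)^4 = ((1+z)^2)^2" by (simp flip: power_mult)
  have "z^2 * (w^2 + of_real n * w + of_real g) = 0"
    using eq unfolding e4 wz by (simp add: algebra_simps power2_eq_square power4_eq_xxxx)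
  then have weq: "w^2 + of_real n * w + of_real g = 0" using z0 by simp
  have "(w + of_real (n/2))^2 = (w^2 + of_real n * w + of_real g) + complex_of_real (n^2/4 - g)"
    by (simp add: algebra_simps power2_eq_square field_simps)
  then have "(w + of_real (n/2))^2 = complex_of_real (n^2/4 - g)" using weq by simp
  then have "w + of_real (n/2) \<in> \<real>" by (rule sq_real) (use assms in auto)
  then have "w \<in> \<real>" by (metis Reals_diff Reals_of_real add_diff_cancel_right')
  then obtain a where wa: "w = complex_of_real a" by (auto elim: Reals_cases)
  have "complex_of_real (a^2 + n*a + g) = 0" using weq unfolding wa by simp
  then have aeq: "a^2 + n*a + g = 0" by (simp only: of_real_eq_0_iff)
  have "a \<le> 0"
  proof (rule ccontr)
    assume "\<not> a \<le> 0"
    then have "a^2 + n*a + g > 0" using assms(1,2) by (simp add: add_pos_nonneg)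
    then show False using aeq by simp
  qed
  have "(z + of_real ((2-a)/2))^2 = ((1+z)^2 - complex_of_real a * z) + complex_of_real (((2-a)/2)^2 - 1)"
    by (simp add: algebra_simps power2_eq_square field_simps)
  then have "(z + of_real ((2-a)/2))^2 = complex_of_real (((2-a)/2)^2 - 1)"
    using wz unfolding wa by simp
  moreover have "((2-a)/2)^2 - 1 \<ge> 0"
  proof -
    have "1 \<le> (2-a)/2" using \<open>a \<le> 0\<close> by simp
    then have "1^2 \<le> ((2-a)/2)^2" by (rule power_mono) simp
    then show ?thesis by simp
  qed
  ultimately have "z + of_real ((2-a)/2) \<in> \<real>" by (rule sq_real)
  then show ?thesis by (metis Reals_diff Reals_of_real add_diff_cancel_right')
qed

lemma fv_basic:
  assumes K: "simplicial_complex K" and fv: "is_f_vector_of [a, b, c] K"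
  shows "0 \<le> b \<and> 0 \<le> c \<and> c \<le> b^2"
proof -
  have fK: "finite K" using K by (simp add: simplicial_complex_def)
  have sub: "\<And>F G. F \<in> K \<Longrightarrow> G \<subseteq> F \<Longrightarrow> G \<in> K" using K by (auto simp: simplicial_complex_def)
  have b: "b = int (face_count K 1)" and c: "c = int (face_count K 2)"
    using fv[unfolded is_f_vector_of_def, rule_format, of 1]
      fv[unfolded is_f_vector_of_def, rule_format, of 2] by auto
  define V where "V = {v. {v} \<in> K}"
  have inj: "inj_on (\<lambda>v. {v}) V" by (auto simp: inj_on_def)
  have im: "(\<lambda>v. {v}) ` V \<subseteq> {F\<in>K. card F = 1}" by (auto simp: V_def)
  have fim: "finite {F\<in>K. card F = 1}" using fK by simp
  have fV: "finite V" using finite_imageD[OF finite_subset[OF im fim] inj] .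
  have cV: "card V \<le> face_count K 1"
    unfolding face_count_def using card_mono[OF fim im] card_image[OF inj] by simp
  have E: "{F\<in>K. card F = 2} \<subseteq> (\<lambda>(x,y). {x,y}) ` (V \<times> V)"
  proof
    fix F assume "F \<in> {F\<in>K. card F = 2}"
    then have FK: "F \<in> K" and "card F = 2" by auto
    then obtain x y where "F = {x,y}" by (auto simp: card_2_iff)
    moreover have "x \<in> V" "y \<in> V" using sub[OF FK] \<open>F = {x,y}\<close> by (auto simp: V_def)
    ultimately show "F \<in> (\<lambda>(x,y). {x,y}) ` (V \<times> V)" by auto
  qed
  have "face_count K 2 \<le> card (V \<times> V)"
    unfolding face_count_def using card_image_le[of "V \<times> V" "\<lambda>(x,y). {x,y}"] fV
      card_mono[OF _ E] by (meson finite_SigmaI finite_imageI le_trans)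
  also have "\<dots> = card V * card V" by (simp add: card_cartesian_product)
  also have "\<dots> \<le> face_count K 1 * face_count K 1" using cV by (simp add: mult_le_mono)
  finally have "face_count K 2 \<le> face_count K 1 ^ 2" by (simp add: power2_eq_square)
  then show ?thesis using b c by (simp flip: of_nat_power)
qed

lemma fv_balanced:
  assumes B: "balanced_complex K" and fv: "is_f_vector_of [a, b, c] K"
  shows "0 \<le> b \<and> 0 \<le> c \<and> 4 * c \<le> b^2"
proof -
  have K: "simplicial_complex K" using B by (simp add: balanced_complex_def)
  obtain r col where pure: "pure_complex K r" and colr: "\<forall>v\<in>\<Union>K. col v < r"
    and inj: "\<forall>F\<in>K. inj_on col F"
    using B by (auto simp: balanced_complex_def)
  have fK: "finite K" using K by (simp add: simplicial_complex_def)
  have finF: "\<And>F. F \<in> K \<Longrightarrow> finite F" using K by (simp add: simplicial_complex_def)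
  have sub: "\<And>F G. F \<in> K \<Longrightarrow> G \<subseteq> F \<Longrightarrow> G \<in> K" using K by (auto simp: simplicial_complex_def)
  have b: "b = int (face_count K 1)" and c: "c = int (face_count K 2)"
    using fv[unfolded is_f_vector_of_def, rule_format, of 1]
      fv[unfolded is_f_vector_of_def, rule_format, of 2] by auto
  have big: "\<And>G. G \<in> K \<Longrightarrow> card G \<le> 2"
  proof (rule ccontr)
    fix G assume GK: "G \<in> K" and "\<not> card G \<le> 2"
    then have "face_count K (card G) = 0"
      using fv[unfolded is_f_vector_of_def, rule_format, of "card G"] by auto
    then have "{F\<in>K. card F = card G} = {}" using fK by (simp add: face_count_def)
    then show False using GK by auto
  qed
  show ?thesis
  proof (cases "face_count K 2 = 0")
    case True then show ?thesis using b c by simp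
  next
    case False
    then obtain F0 where F0K: "F0 \<in> K" and F0c: "card F0 = 2"
    proof -
      from False have "{F\<in>K. card F = 2} \<noteq> {}" unfolding face_count_def by (metis card.empty)
      then show ?thesis using that by blast
    qed
    have "card F0 = r"
    proof (rule pure[unfolded pure_complex_def, rule_format, OF F0K])
      fix G assume "G \<in> K" "F0 \<subseteq> G"
      moreover have "card G \<le> 2" using big \<open>G \<in> K\<close> by simp
      moreover have "card F0 \<le> card G" using finF \<open>G \<in> K\<close> \<open>F0 \<subseteq> G\<close> card_mono by blast
      ultimately show "G = F0" using F0c finF card_subset_eq[of G F0] by simp
    qed
    then have r2: "r = 2" using F0c by simp
    define A where "A = {v. {v} \<in> K \<and> col v = 0}"
    define Bs where "Bs = {v. {v} \<in> K \<and> col v = 1}"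
    define V where "V = {v. {v} \<in> K}"
    have injs: "inj_on (\<lambda>v. {v}) V" by (auto simp: inj_on_def)
    have im: "(\<lambda>v. {v}) ` V \<subseteq> {F\<in>K. card F = 1}" by (auto simp: V_def)
    have fim: "finite {F\<in>K. card F = 1}" using fK by simp
    have fV: "finite V" using finite_imageD[OF finite_subset[OF im fim] injs] .
    have cV: "card V \<le> face_count K 1"
      unfolding face_count_def using card_mono[OF fim im] card_image[OF injs] by simp
    have AB: "A \<union> Bs \<subseteq> V" "A \<inter> Bs = {}" by (auto simp: A_def Bs_def V_def)
    have fA: "finite A" "finite Bs" using AB fV by (auto intro: finite_subset)
    have "card A + card Bs = card (A \<union> Bs)" using AB fA by (simp add: card_Un_disjoint)
    also have "\<dots> \<le> card V" using AB fV by (simp add: card_mono)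
    finally have cAB: "card A + card Bs \<le> face_count K 1" using cV by simp
    have E: "{F\<in>K. card F = 2} \<subseteq> (\<lambda>(x,y). {x,y}) ` (A \<times> Bs)"
    proof
      fix F assume "F \<in> {F\<in>K. card F = 2}"
      then have FK: "F \<in> K" and "card F = 2" by auto
      then obtain x y where Fxy: "F = {x,y}" and xy: "x \<noteq> y" by (auto simp: card_2_iff)
      have "inj_on col F" using inj FK by blast
      then have "col x \<noteq> col y" using Fxy xy by (simp add: inj_on_def)
      moreover have "x \<in> \<Union>K" "y \<in> \<Union>K" using FK Fxy by blast+
      then have "col x < 2" "col y < 2" using colr r2 by auto
      moreover have "{x} \<in> K" "{y} \<in> K" using sub[OF FK] Fxy by auto
      ultimately have "(col x = 0 \<and> col y = 1) \<or> (col y = 0 \<and> col x = 1)" by linarith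
      then have "(x,y) \<in> A \<times> Bs \<or> (y,x) \<in> A \<times> Bs" using \<open>{x} \<in> K\<close> \<open>{y} \<in> K\<close> by (auto simp: A_def Bs_def)
      then show "F \<in> (\<lambda>(x,y). {x,y}) ` (A \<times> Bs)"
      proof
        assume "(x,y) \<in> A \<times> Bs" then show ?thesis using Fxy by (simp add: image_iff) blast
      next
        assume "(y,x) \<in> A \<times> Bs" then show ?thesis using Fxy by (simp add: image_iff) (metis insert_commute)
      qed
    qed
    have "face_count K 2 \<le> card (A \<times> Bs)"
      unfolding face_count_def using card_image_le[of "A \<times> Bs" "\<lambda>(x,y). {x,y}"] fA
        card_mono[OF _ E] by (meson finite_SigmaI finite_imageI le_trans)
    also have "\<dots> = card A * card Bs" by (simp add: card_cartesian_product)
    finally have e: "int (face_count K 2) \<le> int (card A) * int (card Bs)" by (simp flip: of_nat_mult)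
    have s: "int (card A) + int (card Bs) \<le> int (face_count K 1)" using cAB by simp
    have "4 * (int (card A) * int (card Bs)) \<le> (int (card A) + int (card Bs))^2"
    proof -
      have "0 \<le> (int (card A) - int (card Bs))^2" by simp
      then show ?thesis by (simp add: power2_diff power2_sum algebra_simps)
    qed
    also have "\<dots> \<le> (int (face_count K 1))^2" using s by (simp add: power_mono)
    finally show ?thesis using b c e by simp
  qed
qed

lemma case4:
  fixes h \<gamma> :: "nat \<Rightarrow> int"
  assumes h0: "h 0 = 1"
    and eq: "(\<Sum>i\<le>4. monom (h i) i) =
         (\<Sum>i\<le>2. smult (\<gamma> i) (monom 1 i * [:1, 1:] ^ (4 - 2 * i)))"
  shows "(\<Sum>i\<le>(4::nat). monom (h i) i) = [:1, 4 + \<gamma> 1, 6+2*\<gamma> 1+\<gamma> 2, 4 + \<gamma> 1, 1:]"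
    and "h 1 = 4 + \<gamma> 1" "h 2 = 6+2*\<gamma> 1+\<gamma> 2" "h 3 = 4 + \<gamma> 1" "h 4 = 1"
proof -
  have P: "(\<Sum>i\<le>(4::nat). monom (h i) i) = [:\<gamma> 0, 4*\<gamma> 0 + \<gamma> 1, 6*\<gamma> 0+2*\<gamma> 1+\<gamma> 2, 4*\<gamma> 0 + \<gamma> 1, \<gamma> 0:]"
    unfolding eq by (simp add: numeral_eq_Suc monom_Suc monom_0 algebra_simps)
  have c: "\<And>k. coeff (\<Sum>i\<le>(4::nat). monom (h i) i) k = (if k \<le> 4 then h k else 0)"
    by (simp add: coeff_sum)
  have g0: "\<gamma> 0 = 1" using c[of 0] h0 unfolding P by simp
  show "(\<Sum>i\<le>(4::nat). monom (h i) i) = [:1, 4 + \<gamma> 1, 6+2*\<gamma> 1+\<gamma> 2, 4 + \<gamma> 1, 1:]"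
    using P g0 by simp
  show "h 1 = 4 + \<gamma> 1" using c[of 1] g0 unfolding P by simp
  show "h 2 = 6+2*\<gamma> 1+\<gamma> 2" using c[of 2] g0 unfolding P by (simp add: numeral_eq_Suc)
  show "h 3 = 4 + \<gamma> 1" using c[of 3] g0 unfolding P by (simp add: numeral_eq_Suc)
  show "h 4 = 1" using c[of 4] g0 unfolding P by (simp add: numeral_eq_Suc)
qed

lemma case5:
  fixes h \<gamma> :: "nat \<Rightarrow> int"
  assumes h0: "h 0 = 1"
    and eq: "(\<Sum>i\<le>5. monom (h i) i) =
         (\<Sum>i\<le>2. smult (\<gamma> i) (monom 1 i * [:1, 1:] ^ (5 - 2 * i)))"
  shows "(\<Sum>i\<le>(5::nat). monom (h i) i) = [:1, 5 + \<gamma> 1, 10+3*\<gamma> 1+\<gamma> 2, 10+3*\<gamma> 1+\<gamma> 2, 5 + \<gamma> 1, 1:]"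
    and "h 1 = 5 + \<gamma> 1" "h 2 = 10+3*\<gamma> 1+\<gamma> 2" "h 3 = 10+3*\<gamma> 1+\<gamma> 2" "h 4 = 5 + \<gamma> 1" "h 5 = 1"
proof -
  have P: "(\<Sum>i\<le>(5::nat). monom (h i) i) = [:\<gamma> 0, 5*\<gamma> 0 + \<gamma> 1, 10*\<gamma> 0+3*\<gamma> 1+\<gamma> 2, 10*\<gamma> 0+3*\<gamma> 1+\<gamma> 2, 5*\<gamma> 0 + \<gamma> 1, \<gamma> 0:]"
    unfolding eq by (simp add: numeral_eq_Suc monom_Suc monom_0 algebra_simps)
  have c: "\<And>k. coeff (\<Sum>i\<le>(5::nat). monom (h i) i) k = (if k \<le> 5 then h k else 0)"
    by (simp add: coeff_sum)
  have g0: "\<gamma> 0 = 1" using c[of 0] h0 unfolding P by simp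
  show "(\<Sum>i\<le>(5::nat). monom (h i) i) = [:1, 5 + \<gamma> 1, 10+3*\<gamma> 1+\<gamma> 2, 10+3*\<gamma> 1+\<gamma> 2, 5 + \<gamma> 1, 1:]"
    using P g0 by simp
  show "h 1 = 5 + \<gamma> 1" using c[of 1] g0 unfolding P by simp
  show "h 2 = 10+3*\<gamma> 1+\<gamma> 2" using c[of 2] g0 unfolding P by (simp add: numeral_eq_Suc)
  show "h 3 = 10+3*\<gamma> 1+\<gamma> 2" using c[of 3] g0 unfolding P by (simp add: numeral_eq_Suc)
  show "h 4 = 5 + \<gamma> 1" using c[of 4] g0 unfolding P by (simp add: numeral_eq_Suc)
  show "h 5 = 1" using c[of 5] g0 unfolding P by (simp add: numeral_eq_Suc)
qed

lemma lc4:
  fixes n g :: int assumes "0 \<le> n" "0 \<le> g" "g \<le> n^2"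
  shows "6+2*n+g \<le> (4+n)^2" "(4+n)*(4+n) \<le> (6+2*n+g)^2"
proof -
  show "6+2*n+g \<le> (4+n)^2" using assms by (simp add: power2_eq_square algebra_simps)
  have "(4+n)^2 \<le> (6+2*n+g)^2" using assms by (intro power_mono) auto
  then show "(4+n)*(4+n) \<le> (6+2*n+g)^2" by (simp add: power2_eq_square)
qed

lemma lc5:
  fixes n g :: int assumes "0 \<le> n" "0 \<le> g" "g \<le> n^2"
  shows "10+3*n+g \<le> (5+n)^2" "(5+n)*(10+3*n+g) \<le> (10+3*n+g)^2"
    "(10+3*n+g)*(5+n) \<le> (10+3*n+g)^2"
proof -
  show "10+3*n+g \<le> (5+n)^2" using assms by (simp add: power2_eq_square algebra_simps)
  have "(5+n)*(10+3*n+g) \<le> (10+3*n+g)*(10+3*n+g)" using assms by (intro mult_right_mono) auto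
  then show "(5+n)*(10+3*n+g) \<le> (10+3*n+g)^2" "(10+3*n+g)*(5+n) \<le> (10+3*n+g)^2"
    by (simp_all add: power2_eq_square algebra_simps)
qed

lemma rr4:
  fixes n g :: int assumes "0 \<le> n" "0 \<le> g" "4*g \<le> n^2"
  shows "real_rooted [:1, 4 + n, 6+2*n+g, 4 + n, 1:]"
  unfolding real_rooted_def
proof (intro allI impI)
  fix z :: complex
  assume "poly (map_poly of_int [:1, 4 + n, 6+2*n+g, 4 + n, 1:]) z = 0"
  moreover have "poly (map_poly of_int [:1, 4 + n, 6+2*n+g, 4 + n, 1:]) z =
    (1+z)^4 + of_real (of_int n) * z * (1+z)^2 + of_real (of_int g) * z^2"
    by (simp add: map_poly_pCons algebra_simps power2_eq_square power4_eq_xxxx)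
  ultimately have "(1+z)^4 + of_real (of_int n) * z * (1+z)^2 + of_real (of_int g) * z^2 = 0" by simp
  then show "z \<in> \<real>" by (rule quartic_real[rotated 3]) (use assms in \<open>simp_all flip: of_int_power\<close>)
qed

lemma rr5:
  fixes n g :: int assumes "0 \<le> n" "0 \<le> g" "4*g \<le> n^2"
  shows "real_rooted [:1, 5 + n, 10+3*n+g, 10+3*n+g, 5 + n, 1:]"
  unfolding real_rooted_def
proof (intro allI impI)
  fix z :: complex
  assume "poly (map_poly of_int [:1, 5 + n, 10+3*n+g, 10+3*n+g, 5 + n, 1:]) z = 0"
  moreover have "poly (map_poly of_int [:1, 5 + n, 10+3*n+g, 10+3*n+g, 5 + n, 1:]) z =
    (1+z) * ((1+z)^4 + of_real (of_int n) * z * (1+z)^2 + of_real (of_int g) * z^2)"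
    by (simp add: map_poly_pCons algebra_simps power2_eq_square power4_eq_xxxx)
  ultimately have "1+z = 0 \<or> (1+z)^4 + of_real (of_int n) * z * (1+z)^2 + of_real (of_int g) * z^2 = 0" by simp
  then show "z \<in> \<real>"
  proof
    assume "1+z = 0"
    have "z = (1+z) - 1" by simp
    also have "\<dots> = -1" using \<open>1+z = 0\<close> by simp
    finally show ?thesis by simp
  next
    assume "(1+z)^4 + of_real (of_int n) * z * (1+z)^2 + of_real (of_int g) * z^2 = 0"
    then show "z \<in> \<real>" by (rule quartic_real[rotated 3]) (use assms in \<open>simp_all flip: of_int_power\<close>)
  qed
qed

theorem corollary8p3:
  fixes d :: nat and h \<gamma> :: "nat \<Rightarrow> int"
  assumes "d \<in> {4, 5}"
    and "h 0 = 1"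
    and "\<forall>i\<le>d. h i = h (d - i)"
    and "(\<Sum>i\<le>d. monom (h i) i) =
         (\<Sum>i\<le>2. smult (\<gamma> i) (monom 1 i * [:1, 1:] ^ (d - 2 * i)))"
  shows "(is_f_vector [\<gamma> 0, \<gamma> 1, \<gamma> 2] \<longrightarrow> log_concave_seq h d) \<and>
         (is_balanced_f_vector [\<gamma> 0, \<gamma> 1, \<gamma> 2] \<longrightarrow>
            real_rooted (\<Sum>i\<le>d. monom (h i) i))"
proof -
  have F: "0 \<le> \<gamma> 1 \<and> 0 \<le> \<gamma> 2 \<and> \<gamma> 2 \<le> (\<gamma> 1)^2" if "is_f_vector [\<gamma> 0, \<gamma> 1, \<gamma> 2]"
    using that fv_basic unfolding is_f_vector_def by blast
  have B: "0 \<le> \<gamma> 1 \<and> 0 \<le> \<gamma> 2 \<and> 4 * \<gamma> 2 \<le> (\<gamma> 1)^2" if "is_balanced_f_vector [\<gamma> 0, \<gamma> 1, \<gamma> 2]"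
    using that fv_balanced unfolding is_balanced_f_vector_def by blast
  from assms(1) have "d = 4 \<or> d = 5" by simp
  then show ?thesis
  proof
    assume d: "d = 4"
    note c = case4[OF assms(2) assms(4)[unfolded d]]
    show ?thesis
    proof (intro conjI impI)
      assume "is_f_vector [\<gamma> 0, \<gamma> 1, \<gamma> 2]"
      then have f: "0 \<le> \<gamma> 1" "0 \<le> \<gamma> 2" "\<gamma> 2 \<le> (\<gamma> 1)^2" using F by auto
      show "log_concave_seq h d" unfolding log_concave_seq_def d
      proof (intro allI impI)
        fix i :: nat assume "0 < i \<and> i < 4"
        then have "i = 1 \<or> i = 2 \<or> i = 3" by auto
        then show "h (i - 1) * h (i + 1) \<le> (h i)\<^sup>2"
          using lc4[OF f] c(2-5) assms(2) by (elim disjE) (simp_all add: mult.commute eval_nat_numeral)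
      qed
    next
      assume "is_balanced_f_vector [\<gamma> 0, \<gamma> 1, \<gamma> 2]"
      then have f: "0 \<le> \<gamma> 1" "0 \<le> \<gamma> 2" "4 * \<gamma> 2 \<le> (\<gamma> 1)^2" using B by auto
      show "real_rooted (\<Sum>i\<le>d. monom (h i) i)" unfolding d c(1) by (rule rr4[OF f])
    qed
  next
    assume d: "d = 5"
    note c = case5[OF assms(2) assms(4)[unfolded d]]
    show ?thesis
    proof (intro conjI impI)
      assume "is_f_vector [\<gamma> 0, \<gamma> 1, \<gamma> 2]"
      then have f: "0 \<le> \<gamma> 1" "0 \<le> \<gamma> 2" "\<gamma> 2 \<le> (\<gamma> 1)^2" using F by auto
      show "log_concave_seq h d" unfolding log_concave_seq_def d
      proof (intro allI impI)
        fix i :: nat assume "0 < i \<and> i < 5"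
        then have "i = 1 \<or> i = 2 \<or> i = 3 \<or> i = 4" by auto
        then show "h (i - 1) * h (i + 1) \<le> (h i)\<^sup>2"
          using lc5[OF f] c(2-6) assms(2) by (elim disjE) (simp_all add: mult.commute eval_nat_numeral)
      qed
    next
      assume "is_balanced_f_vector [\<gamma> 0, \<gamma> 1, \<gamma> 2]"
      then have f: "0 \<le> \<gamma> 1" "0 \<le> \<gamma> 2" "4 * \<gamma> 2 \<le> (\<gamma> 1)^2" using B by auto
      show "real_rooted (\<Sum>i\<le>d. monom (h i) i)" unfolding d c(1) by (rule rr5[OF f])
    qed
  qed
qed

end
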